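(* Let $\mathbb{X}$ and $\mathbb{Y}$ be absolutely matrix ordered spaces and $\varphi:\mathbb{X}\to \mathbb{Y}$ a completely absolute value preserving map. Put $Ker(\varphi)=\lbrace x\in \mathbb{X}:\varphi(x)=0\rbrace.$ Then: (1) $\mathbb{M}_{l,m}(Ker(\varphi))=Ker(\varphi_{l,m})$ for every $l,m\in \mathbb{N}.$ (2) $Ker(\varphi_l)$ is self-adjoint for every $l\in \mathbb{N}.$ (3) $Ker(\varphi)$ is an absolute matrix order ideal of $\mathbb{X}.$ (4) $\varphi=0$ if and only if $Ker(\varphi)=\mathbb{X}$ if and only if $Ker(\varphi)^+=\mathbb{X}^+.$ Moreover, if $\mathbb{X}$ is an absolute matrix order unit space with order unit $e$, then (5) $\varphi=0$ if and only if $\varphi(e)=0.$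
   Context: An absolutely matrix ordered space is a matrix ordered space $(\mathbb{X},\{\mathbb{M}_m(\mathbb{X})^+\})$ with maps $\vert\cdot\vert_{l,m}:\mathbb{M}_{l,m}(\mathbb{X})\to\mathbb{M}_m(\mathbb{X})^+$ such that each $(\mathbb{M}_m(\mathbb{X})_{sa},\mathbb{M}_m(\mathbb{X})^+,\vert\cdot\vert_m)$ is an absolutely ordered space, $\vert\varsigma_1x\varsigma_2\vert\le\Vert\varsigma_1\Vert\,\vert\vert x\vert\varsigma_2\vert$ for scalar matrices $\varsigma_1,\varsigma_2$, and $\vert x\circledast y\vert=\vert x\vert\circledast\vert y\vert$. $\varphi_{l,m}:\mathbb{M}_{l,m}(\mathbb{X})\to\mathbb{M}_{l,m}(\mathbb{Y})$ denotes the entrywise amplification $[x_{i,j}]\mapsto[\varphi(x_{i,j})]$, $\varphi_l=\varphi_{l,l}$; $\varphi$ is completely absolute value preserving if it is linear and $\varphi_l(\vert x\vert_l)=\vert\varphi_l(x)\vert_l$ for all $x\in\mathbb{M}_l(\mathbb{X})$ and all $l$ (this implies $\varphi_l(x^* )=\varphi_l(x)^*$). A subspace $\mathbb{Z}\subseteq\mathbb{X}$ is an absolute matrix order ideal if, with $\mathbb{M}_l(\mathbb{Z})^+=\mathbb{M}_l(\mathbb{X})^+\cap\mathbb{M}_l(\mathbb{Z})$, each $\mathbb{M}_l(\mathbb{Z})_{sa}$ is an order ideal of $\mathbb{M}_l(\mathbb{X})_{sa}$ and $\vert\cdot\vert_{l,m}$ maps $\mathbb{M}_{l,m}(\mathbb{Z})$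 into $\mathbb{M}_m(\mathbb{Z})^+$. $Ker(\varphi)^+=Ker(\varphi)\cap\mathbb{X}^+$. *)

theory Defs
  imports Complex_Main "Jordan_Normal_Form.Matrix"
begin

(* A complex vector space X is modelled by a type 'a :: ab_group_add together with
   a scalar multiplication sc :: complex => 'a => 'a satisfying the library
   axioms Vector_Spaces.vector_space.  Matrices over X are Jordan_Normal_Form
   matrices 'a mat; M_{l,m}(X) = carrier_mat l m. *)

definition rsm :: "(complex \<Rightarrow> 'a \<Rightarrow> 'a) \<Rightarrow> real \<Rightarrow> 'a mat \<Rightarrow> 'a mat" where
  "rsm sc k x = map_mat (sc (complex_of_real k)) x"

definition csm :: "(complex \<Rightarrow> 'a \<Rightarrow> 'a) \<Rightarrow> complex \<Rightarrow> 'a mat \<Rightarrow> 'a mat" where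
  "csm sc c x = map_mat (sc c) x"

definition mstar :: "('a \<Rightarrow> 'a) \<Rightarrow> 'a mat \<Rightarrow> 'a mat" where
  "mstar st x = mat (dim_col x) (dim_row x) (\<lambda>(i,j). st (x $$ (j,i)))"

definition cadj :: "complex mat \<Rightarrow> complex mat" where
  "cadj a = mat (dim_col a) (dim_row a) (\<lambda>(i,j). cnj (a $$ (j,i)))"

definition smL :: "(complex \<Rightarrow> 'a \<Rightarrow> 'a::ab_group_add) \<Rightarrow> complex mat \<Rightarrow> 'a mat \<Rightarrow> 'a mat" where
  "smL sc a x = mat (dim_row a) (dim_col x) (\<lambda>(i,j). \<Sum>k<dim_col a. sc (a $$ (i,k)) (x $$ (k,j)))"

definition smR :: "(complex \<Rightarrow> 'a \<Rightarrow> 'a::ab_group_add) \<Rightarrow> 'a mat \<Rightarrow> complex mat \<Rightarrow> 'a mat" where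
  "smR sc x a = mat (dim_row x) (dim_col a) (\<lambda>(i,j). \<Sum>k<dim_col x. sc (a $$ (k,j)) (x $$ (i,k)))"

definition dsum :: "'a::zero mat \<Rightarrow> 'a mat \<Rightarrow> 'a mat" where
  "dsum x y = four_block_mat x (0\<^sub>m (dim_row x) (dim_col y)) (0\<^sub>m (dim_row y) (dim_col x)) y"

definition cvnorm :: "complex vec \<Rightarrow> real" where
  "cvnorm v = sqrt (\<Sum>i<dim_vec v. (cmod (v $ i))\<^sup>2)"

definition opnorm :: "complex mat \<Rightarrow> real" where
  "opnorm a = Sup {cvnorm (a *\<^sub>v v) | v. v \<in> carrier_vec (dim_col a) \<and> cvnorm v \<le> 1}"

definition sa_mats :: "('a \<Rightarrow> 'a) \<Rightarrow> nat \<Rightarrow> 'a mat set" where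
  "sa_mats st n = {x \<in> carrier_mat n n. mstar st x = x}"

definition mats_of :: "'a set \<Rightarrow> nat \<Rightarrow> nat \<Rightarrow> 'a mat set" where
  "mats_of Z l m = {x \<in> carrier_mat l m. \<forall>i<l. \<forall>j<m. x $$ (i,j) \<in> Z}"

definition ordered_space :: "(complex \<Rightarrow> 'a \<Rightarrow> 'a::ab_group_add) \<Rightarrow> 'a mat set \<Rightarrow> 'a mat set \<Rightarrow> bool" where
  "ordered_space sc V C \<longleftrightarrow>
     C \<subseteq> V \<and> (\<forall>u\<in>C. \<forall>v\<in>C. u + v \<in> C) \<and> (\<forall>k\<ge>0. \<forall>v\<in>C. rsm sc k v \<in> C)
     \<and> (\<forall>v\<in>C. - v \<in> C \<longrightarrow> v = 0\<^sub>m (dim_row v) (dim_col v))"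

definition abs_ordered_space ::
  "(complex \<Rightarrow> 'a \<Rightarrow> 'a::ab_group_add) \<Rightarrow> 'a mat set \<Rightarrow> 'a mat set \<Rightarrow> ('a mat \<Rightarrow> 'a mat) \<Rightarrow> bool" where
  "abs_ordered_space sc V C f \<longleftrightarrow>
     ordered_space sc V C
     \<and> (\<forall>v\<in>V. f v \<in> C)
     \<and> (\<forall>v\<in>C. f v = v)
     \<and> (\<forall>v\<in>V. f v + v \<in> C \<and> f v - v \<in> C)
     \<and> (\<forall>v\<in>V. \<forall>k. f (rsm sc k v) = rsm sc \<bar>k\<bar> (f v))
     \<and> (\<forall>u\<in>V. \<forall>v\<in>V. \<forall>w\<in>V. f (u - v) = u + v \<and> w \<in> C \<and> v - w \<in> C
            \<longrightarrow> f (u - w) = u + w)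
     \<and> (\<forall>u\<in>V. \<forall>v\<in>V. \<forall>w\<in>V. f (u - v) = u + v \<and> f (u - w) = u + w
            \<longrightarrow> f (u - f (v + w)) = u + f (v + w) \<and> f (u - f (v - w)) = u + f (v - w))
     \<and> (\<forall>u\<in>V. \<forall>v\<in>V. \<forall>w\<in>V. f (u - v) = u + v \<and> w \<in> C \<and> u - w \<in> C
            \<longrightarrow> f (w - v) = w + v)"

definition matrix_ordered_space ::
  "(complex \<Rightarrow> 'a \<Rightarrow> 'a::ab_group_add) \<Rightarrow> ('a \<Rightarrow> 'a) \<Rightarrow> (nat \<Rightarrow> 'a mat set) \<Rightarrow> bool" where
  "matrix_ordered_space sc st P \<longleftrightarrow>
     Vector_Spaces.vector_space sc
     \<and> (\<forall>x y. st (x + y) = st x + st y)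
     \<and> (\<forall>c x. st (sc c x) = sc (cnj c) (st x))
     \<and> (\<forall>x. st (st x) = x)
     \<and> (\<forall>n>0. ordered_space sc (sa_mats st n) (P n))
     \<and> (\<forall>n m. 0 < n \<longrightarrow> 0 < m \<longrightarrow>
           (\<forall>a\<in>carrier_mat n m. \<forall>x\<in>P n. smR sc (smL sc (cadj a) x) a \<in> P m))"

text \<open>absolutely matrix ordered space; ab is the family of maps |.|_{l,m}\<close>
definition abs_matrix_ordered_space ::
  "(complex \<Rightarrow> 'a \<Rightarrow> 'a::ab_group_add) \<Rightarrow> ('a \<Rightarrow> 'a) \<Rightarrow> (nat \<Rightarrow> 'a mat set) \<Rightarrow> ('a mat \<Rightarrow> 'a mat) \<Rightarrow> bool" where
  "abs_matrix_ordered_space sc st P ab \<longleftrightarrow>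
     matrix_ordered_space sc st P
     \<and> (\<forall>l m. 0 < l \<longrightarrow> 0 < m \<longrightarrow> (\<forall>x\<in>carrier_mat l m. ab x \<in> P m))
     \<and> (\<forall>m>0. abs_ordered_space sc (sa_mats st m) (P m) ab)
     \<and> (\<forall>l m n r. 0 < l \<longrightarrow> 0 < m \<longrightarrow> 0 < n \<longrightarrow> 0 < r \<longrightarrow>
          (\<forall>x\<in>carrier_mat l m. \<forall>a1\<in>carrier_mat n l. \<forall>a2\<in>carrier_mat m r.
             rsm sc (opnorm a1) (ab (smR sc (ab x) a2)) - ab (smR sc (smL sc a1 x) a2) \<in> P r))
     \<and> (\<forall>l m n r. 0 < l \<longrightarrow> 0 < m \<longrightarrow> 0 < n \<longrightarrow> 0 < r \<longrightarrow>
          (\<forall>x\<in>carrier_mat l m. \<forall>y\<in>carrier_mat n r. ab (dsum x y) = dsum (ab x) (ab y)))"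

definition diag_e :: "nat \<Rightarrow> 'a::zero \<Rightarrow> 'a mat" where
  "diag_e n e = mat n n (\<lambda>(i,j). if i = j then e else 0)"

definition ou_norm :: "(complex \<Rightarrow> 'a \<Rightarrow> 'a::ab_group_add) \<Rightarrow> (nat \<Rightarrow> 'a mat set) \<Rightarrow> 'a \<Rightarrow> nat \<Rightarrow> 'a mat \<Rightarrow> real" where
  "ou_norm sc P e n v = Inf {k. 0 < k \<and> rsm sc k (diag_e n e) + v \<in> P n \<and> rsm sc k (diag_e n e) - v \<in> P n}"

definition matrix_order_unit_space ::
  "(complex \<Rightarrow> 'a \<Rightarrow> 'a::ab_group_add) \<Rightarrow> ('a \<Rightarrow> 'a) \<Rightarrow> (nat \<Rightarrow> 'a mat set) \<Rightarrow> 'a \<Rightarrow> bool" where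
  "matrix_order_unit_space sc st P e \<longleftrightarrow>
     matrix_ordered_space sc st P
     \<and> (\<forall>n>0. diag_e n e \<in> P n
        \<and> (\<forall>v\<in>sa_mats st n. \<exists>k>0. rsm sc k (diag_e n e) + v \<in> P n \<and> rsm sc k (diag_e n e) - v \<in> P n)
        \<and> (\<forall>v\<in>sa_mats st n. (\<forall>k>0. rsm sc k (diag_e n e) + v \<in> P n) \<longrightarrow> v \<in> P n))"

text \<open>absolute matrix order unit space: each (M_n(X)_sa, e^n) is an absolute order unit
  space, i.e. orthogonality |u - v| = u + v coincides with \<infinity>-orthogonality on M_n(X)^+\<close>
definition abs_matrix_order_unit_space ::
  "(complex \<Rightarrow> 'a \<Rightarrow> 'a::ab_group_add) \<Rightarrow> ('a \<Rightarrow> 'a) \<Rightarrow> (nat \<Rightarrow> 'a mat set) \<Rightarrow> ('a mat \<Rightarrow> 'a mat) \<Rightarrow> 'a \<Rightarrow> bool" where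
  "abs_matrix_order_unit_space sc st P ab e \<longleftrightarrow>
     abs_matrix_ordered_space sc st P ab
     \<and> matrix_order_unit_space sc st P e
     \<and> (\<forall>n>0. \<forall>u\<in>P n. \<forall>v\<in>P n.
          ab (u - v) = u + v \<longleftrightarrow>
          (\<forall>k::real. ou_norm sc P e n (u + rsm sc k v)
                       = max (ou_norm sc P e n u) (ou_norm sc P e n (rsm sc k v))))"

definition completely_abs_preserving ::
  "(complex \<Rightarrow> 'a \<Rightarrow> 'a::ab_group_add) \<Rightarrow> (complex \<Rightarrow> 'b \<Rightarrow> 'b::ab_group_add)
   \<Rightarrow> ('a mat \<Rightarrow> 'a mat) \<Rightarrow> ('b mat \<Rightarrow> 'b mat) \<Rightarrow> ('a \<Rightarrow> 'b) \<Rightarrow> bool" where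
  "completely_abs_preserving scX scY abX abY \<phi> \<longleftrightarrow>
     Vector_Spaces.linear scX scY \<phi>
     \<and> (\<forall>l>0. \<forall>x\<in>carrier_mat l l. map_mat \<phi> (abX x) = abY (map_mat \<phi> x))"

definition Ker :: "('a \<Rightarrow> 'b::zero) \<Rightarrow> 'a set" where
  "Ker \<phi> = {x. \<phi> x = 0}"

definition mat_Ker :: "('a \<Rightarrow> 'b::zero) \<Rightarrow> nat \<Rightarrow> nat \<Rightarrow> 'a mat set" where
  "mat_Ker \<phi> l m = {x \<in> carrier_mat l m. map_mat \<phi> x = 0\<^sub>m l m}"

text \<open>X^+ = M_1(X)^+, identifying X with M_1(X)\<close>
definition pos_part :: "(nat \<Rightarrow> 'a mat set) \<Rightarrow> 'a set" where
  "pos_part P = {x. mat 1 1 (\<lambda>_. x) \<in> P 1}"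

definition abs_matrix_order_ideal ::
  "(complex \<Rightarrow> 'a \<Rightarrow> 'a::ab_group_add) \<Rightarrow> ('a \<Rightarrow> 'a) \<Rightarrow> (nat \<Rightarrow> 'a mat set) \<Rightarrow> ('a mat \<Rightarrow> 'a mat) \<Rightarrow> 'a set \<Rightarrow> bool" where
  "abs_matrix_order_ideal sc st P ab Z \<longleftrightarrow>
     0 \<in> Z \<and> (\<forall>x\<in>Z. \<forall>y\<in>Z. x + y \<in> Z) \<and> (\<forall>c. \<forall>x\<in>Z. sc c x \<in> Z)
     \<and> (\<forall>l>0. \<forall>x\<in>mats_of Z l l \<inter> sa_mats st l. \<forall>y\<in>sa_mats st l.
           y \<in> P l \<and> x - y \<in> P l \<longrightarrow> y \<in> mats_of Z l l)
     \<and> (\<forall>l m. 0 < l \<longrightarrow> 0 < m \<longrightarrow> (\<forall>x\<in>mats_of Z l m. ab x \<in> P m \<inter> mats_of Z m m))"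

end

theory Submission
  imports Defs
begin

definition one1 :: "'a \<Rightarrow> 'a mat" where "one1 a = mat 1 1 (\<lambda>_. a)"

lemma one1_simps[simp]:
  "one1 a $$ (0,0) = a" "one1 a \<in> carrier_mat 1 1" "dim_row (one1 a) = 1" "dim_col (one1 a) = 1"
  unfolding one1_def by auto

lemma one1_eq: "x \<in> carrier_mat 1 1 \<Longrightarrow> x = one1 (x $$ (0,0))"
  unfolding one1_def by (rule eq_matI) auto

lemma one1_map: "map_mat f (one1 a) = one1 (f a)"
  unfolding one1_def by (rule eq_matI) auto

lemma one1_add: "one1 a + one1 b = one1 (a + b)"
  unfolding one1_def by (rule eq_matI) auto

lemma one1_minus: "one1 a - one1 b = one1 (a - b)"
  unfolding one1_def by (rule eq_matI) auto

lemma one1_uminus: "- one1 a = one1 (- a)"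
  unfolding one1_def by (rule eq_matI) auto

lemma one1_inj: "one1 a = one1 b \<Longrightarrow> a = b"
  by (metis one1_simps(1))

lemma one1_mstar: "mstar st (one1 a) = one1 (st a)"
  unfolding one1_def mstar_def by (rule eq_matI) auto

lemma one1_rsm: "rsm sc k (one1 a) = one1 (sc (complex_of_real k) a)"
  unfolding one1_def rsm_def by (rule eq_matI) auto

lemma diag_e1: "diag_e 1 e = one1 e"
  unfolding one1_def diag_e_def by (rule eq_matI) auto

lemma pos_part_iff: "a \<in> pos_part P \<longleftrightarrow> one1 a \<in> P 1"
  unfolding pos_part_def one1_def by simp

lemma amos_parts:
  assumes "abs_matrix_ordered_space sc st P ab"
  shows "Vector_Spaces.vector_space sc"
    "\<And>x y. st (x + y) = st x + st y"
    "\<And>c x. st (sc c x) = sc (cnj c) (st x)"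
    "\<And>n. 0 < n \<Longrightarrow> ordered_space sc (sa_mats st n) (P n)"
    "\<And>l m x. 0 < l \<Longrightarrow> 0 < m \<Longrightarrow> x \<in> carrier_mat l m \<Longrightarrow> ab x \<in> P m"
    "\<And>m. 0 < m \<Longrightarrow> abs_ordered_space sc (sa_mats st m) (P m) ab"
    "\<And>l m n r x y. 0 < l \<Longrightarrow> 0 < m \<Longrightarrow> 0 < n \<Longrightarrow> 0 < r \<Longrightarrow>
          x\<in>carrier_mat l m \<Longrightarrow> y\<in>carrier_mat n r \<Longrightarrow> ab (dsum x y) = dsum (ab x) (ab y)"
proof -
  have A: "matrix_ordered_space sc st P"
    and B: "\<forall>l m. 0 < l \<longrightarrow> 0 < m \<longrightarrow> (\<forall>x\<in>carrier_mat l m. ab x \<in> P m)"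
    and C: "\<forall>m>0. abs_ordered_space sc (sa_mats st m) (P m) ab"
    and D: "\<forall>l m n r. 0 < l \<longrightarrow> 0 < m \<longrightarrow> 0 < n \<longrightarrow> 0 < r \<longrightarrow>
          (\<forall>x\<in>carrier_mat l m. \<forall>y\<in>carrier_mat n r. ab (dsum x y) = dsum (ab x) (ab y))"
    using assms unfolding abs_matrix_ordered_space_def by simp_all
  have A1: "Vector_Spaces.vector_space sc" and A2: "\<forall>x y. st (x + y) = st x + st y"
    and A3: "\<forall>c x. st (sc c x) = sc (cnj c) (st x)"
    and A4: "\<forall>n>0. ordered_space sc (sa_mats st n) (P n)"
    using A unfolding matrix_ordered_space_def by simp_all
  show "Vector_Spaces.vector_space sc" by (rule A1)
  show "\<And>x y. st (x + y) = st x + st y" using A2 by simp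
  show "\<And>c x. st (sc c x) = sc (cnj c) (st x)" using A3 by simp
  show "\<And>n. 0 < n \<Longrightarrow> ordered_space sc (sa_mats st n) (P n)" using A4 by simp
  show "\<And>l m x. 0 < l \<Longrightarrow> 0 < m \<Longrightarrow> x \<in> carrier_mat l m \<Longrightarrow> ab x \<in> P m" using B by simp
  show "\<And>m. 0 < m \<Longrightarrow> abs_ordered_space sc (sa_mats st m) (P m) ab" using C by simp
  show "\<And>l m n r x y. 0 < l \<Longrightarrow> 0 < m \<Longrightarrow> 0 < n \<Longrightarrow> 0 < r \<Longrightarrow>
          x\<in>carrier_mat l m \<Longrightarrow> y\<in>carrier_mat n r \<Longrightarrow> ab (dsum x y) = dsum (ab x) (ab y)"
    using D by simp
qed

lemma P_sub:
  assumes "abs_matrix_ordered_space sc st P ab" "0 < n" "v \<in> P n"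
  shows "v \<in> sa_mats st n" "v \<in> carrier_mat n n" "ab v = v"
proof -
  have o: "ordered_space sc (sa_mats st n) (P n)" using amos_parts(4)[OF assms(1,2)] .
  show 1: "v \<in> sa_mats st n" using o assms(3) unfolding ordered_space_def by blast
  then show "v \<in> carrier_mat n n" unfolding sa_mats_def by blast
  show "ab v = v" using amos_parts(6)[OF assms(1,2)] assms(3) unfolding abs_ordered_space_def by blast
qed

lemma proper:
  assumes "abs_matrix_ordered_space sc st P ab" "0 < n" "v \<in> P n" "- v \<in> P n"
  shows "v = 0\<^sub>m n n"
proof -
  have o: "ordered_space sc (sa_mats st n) (P n)" using amos_parts(4)[OF assms(1,2)] .
  have "v \<in> carrier_mat n n" using P_sub[OF assms(1-3)] by blast
  then show ?thesis using o assms(3,4) unfolding ordered_space_def by auto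
qed

lemma st_zero:
  fixes st :: "'a::ab_group_add \<Rightarrow> 'a"
  assumes "\<And>x y. st (x + y) = st x + st y"
  shows "st 0 = (0::'a::ab_group_add)"
proof -
  have "st 0 + st 0 = st 0 + 0" using assms[of 0 0] by simp
  then show ?thesis by (rule add_left_imp_eq)
qed

lemma st_diff:
  fixes st :: "'a::ab_group_add \<Rightarrow> 'a"
  assumes "\<And>x y. st (x + y) = st x + st y"
  shows "st (x - y) = st x - (st y::'a::ab_group_add)"
proof -
  have "st x = st (x - y) + st y" using assms[of "x - y" y] by simp
  then show ?thesis by (simp add: eq_diff_eq)
qed

lemma ab_zero:
  assumes "abs_matrix_ordered_space sc st P ab" "0 < n"
  shows "ab (0\<^sub>m n n) = 0\<^sub>m n n"
proof -
  interpret V: vector_space sc using amos_parts(1)[OF assms(1)] .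
  have w: "ab (0\<^sub>m n n) \<in> P n" using amos_parts(5)[OF assms(1) assms(2) assms(2)] by auto
  have o: "ordered_space sc (sa_mats st n) (P n)" using amos_parts(4)[OF assms(1,2)] .
  have "rsm sc 0 (ab (0\<^sub>m n n)) \<in> P n" using o w unfolding ordered_space_def by auto
  moreover have "rsm sc 0 (ab (0\<^sub>m n n)) = 0\<^sub>m n n"
    using P_sub(2)[OF assms w] unfolding rsm_def by (intro eq_matI) auto
  ultimately have "0\<^sub>m n n \<in> P n" by simp
  then show ?thesis using P_sub(3)[OF assms] by blast
qed

lemma pos_to_pos:
  assumes X: "abs_matrix_ordered_space scX stX PX abX"
    and Y: "abs_matrix_ordered_space scY stY PY abY"
    and phi: "completely_abs_preserving scX scY abX abY \<phi>"
    and n: "0 < n" and x: "x \<in> PX n"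
  shows "map_mat \<phi> x \<in> PY n"
proof -
  have c: "x \<in> carrier_mat n n" and a: "abX x = x" using P_sub[OF X n x] by auto
  have "map_mat \<phi> x = abY (map_mat \<phi> x)"
    using phi c n a unfolding completely_abs_preserving_def by metis
  moreover have "abY (map_mat \<phi> x) \<in> PY n" using amos_parts(5)[OF Y n n] c by auto
  ultimately show ?thesis by simp
qed

lemma sa_decomp:
  assumes X: "abs_matrix_ordered_space scX stX PX abX" and sa: "stX a = a"
  shows "\<exists>p q. one1 p \<in> PX 1 \<and> one1 q \<in> PX 1 \<and> a = p - q"
proof -
  have s: "one1 a \<in> sa_mats stX 1" unfolding sa_mats_def using sa one1_simps(2)[of a] by (simp add: one1_mstar)
  have ao: "abs_ordered_space scX (sa_mats stX 1) (PX 1) abX" using amos_parts(6)[OF X] by simp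
  have A: "abX (one1 a) \<in> PX 1" and B: "abX (one1 a) + one1 a \<in> PX 1"
    using ao s unfolding abs_ordered_space_def by blast+
  have cA: "abX (one1 a) \<in> carrier_mat 1 1" using P_sub(2)[OF X _ A] by simp
  define q where "q = abX (one1 a) $$ (0,0)"
  have Aq: "abX (one1 a) = one1 q" using one1_eq[OF cA] q_def by simp
  show ?thesis
    apply (rule exI[of _ "q + a"], rule exI[of _ q])
    using A B by (simp add: Aq one1_add)
qed

lemma amos_inv:
  assumes "abs_matrix_ordered_space sc st P ab"
  shows "st (st x) = x"
proof -
  have A: "matrix_ordered_space sc st P"
    using assms unfolding abs_matrix_ordered_space_def by simp
  have "\<forall>x. st (st x) = x" using A unfolding matrix_ordered_space_def by simp
  then show ?thesis by simp
qed

lemma reim: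
  fixes sc :: "complex \<Rightarrow> 'a::ab_group_add \<Rightarrow> 'a" and st :: "'a \<Rightarrow> 'a"
  assumes vs: "Vector_Spaces.vector_space sc"
    and add: "\<And>x y. st (x + y) = st x + st y"
    and scl: "\<And>c x. st (sc c x) = sc (cnj c) (st x)"
    and inv: "\<And>x. st (st x) = x"
  shows "\<exists>h k. st h = h \<and> st k = k \<and> x = h + sc \<i> k \<and> st x = h - sc \<i> k"
proof -
  interpret V: vector_space sc by (rule vs)
  define h where "h = sc (1/2) (x + st x)"
  define k where "k = sc (- \<i>/2) (x - st x)"
  have two: "\<And>v. v + v = sc 2 v"
  proof -
    fix v
    have "sc (1 + 1) v = sc 1 v + sc 1 v" by (rule V.scale_left_distrib)
    then show "v + v = sc 2 v" by simp
  qed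
  have half: "\<And>v. sc (1/2) (v + v) = v"
    by (simp add: two)
  have "st h = sc (1/2) (st x + x)" unfolding h_def by (simp add: scl add inv)
  then have sh: "st h = h" unfolding h_def by (simp add: add.commute)
  have "st k = sc (cnj (- \<i>/2)) (st (x - st x))" unfolding k_def by (rule scl)
  also have "\<dots> = sc (\<i>/2) (st x - x)"
    by (simp add: st_diff[of st, OF add] inv)
  also have "\<dots> = sc (- \<i>/2) (x - st x)"
  proof -
    have "sc (- \<i>/2) (x - st x) = - sc (\<i>/2) (x - st x)"
      using V.scale_minus_left[of "\<i>/2" "x - st x"] by simp
    also have "\<dots> = sc (\<i>/2) (- (x - st x))" by (rule V.scale_minus_right[symmetric])
    finally show ?thesis by (metis minus_diff_eq)
  qed
  finally have sk: "st k = k" unfolding k_def .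
  have ik: "sc \<i> k = sc (1/2) (x - st x)" unfolding k_def by simp
  have e1: "h + sc \<i> k = x"
  proof -
    have "h + sc \<i> k = sc (1/2) ((x + st x) + (x - st x))"
      unfolding ik h_def by (rule V.scale_right_distrib[symmetric])
    also have "(x + st x) + (x - st x) = x + x" by simp
    finally show ?thesis using half by simp
  qed
  have e2: "h - sc \<i> k = st x"
  proof -
    have "h - sc \<i> k = sc (1/2) ((x + st x) - (x - st x))"
      unfolding ik h_def by (rule V.scale_right_diff_distrib[symmetric])
    also have "(x + st x) - (x - st x) = st x + st x" by simp
    finally show ?thesis using half by simp
  qed
  show ?thesis using sh sk e1 e2 by metis
qed

lemma ker_iff:
  assumes "x \<in> carrier_mat l m"
  shows "map_mat \<phi> x = 0\<^sub>m l m \<longleftrightarrow> (\<forall>i<l. \<forall>j<m. \<phi> (x $$ (i,j)) = 0)"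
proof
  assume h: "map_mat \<phi> x = 0\<^sub>m l m"
  show "\<forall>i<l. \<forall>j<m. \<phi> (x $$ (i,j)) = 0"
  proof (intro allI impI)
    fix i j assume "i < l" "j < m"
    then have "map_mat \<phi> x $$ (i,j) = 0\<^sub>m l m $$ (i,j)" using h by simp
    then show "\<phi> (x $$ (i,j)) = 0" using assms \<open>i < l\<close> \<open>j < m\<close> by simp
  qed
next
  assume "\<forall>i<l. \<forall>j<m. \<phi> (x $$ (i,j)) = 0"
  then show "map_mat \<phi> x = 0\<^sub>m l m" using assms by (intro eq_matI) auto
qed

theorem theorem3p8:
  fixes scX :: "complex \<Rightarrow> 'a::ab_group_add \<Rightarrow> 'a" and stX :: "'a \<Rightarrow> 'a"
    and PX :: "nat \<Rightarrow> 'a mat set" and abX :: "'a mat \<Rightarrow> 'a mat"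
    and scY :: "complex \<Rightarrow> 'b::ab_group_add \<Rightarrow> 'b" and stY :: "'b \<Rightarrow> 'b"
    and PY :: "nat \<Rightarrow> 'b mat set" and abY :: "'b mat \<Rightarrow> 'b mat"
    and \<phi> :: "'a \<Rightarrow> 'b"
  assumes X: "abs_matrix_ordered_space scX stX PX abX"
    and Y: "abs_matrix_ordered_space scY stY PY abY"
    and phi: "completely_abs_preserving scX scY abX abY \<phi>"
  shows "(\<forall>l m. 0 < l \<longrightarrow> 0 < m \<longrightarrow> mats_of (Ker \<phi>) l m = mat_Ker \<phi> l m)
    \<and> (\<forall>l>0. \<forall>x\<in>mat_Ker \<phi> l l. mstar stX x \<in> mat_Ker \<phi> l l)
    \<and> abs_matrix_order_ideal scX stX PX abX (Ker \<phi>)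
    \<and> (\<phi> = (\<lambda>_. 0) \<longleftrightarrow> Ker \<phi> = UNIV)
    \<and> (Ker \<phi> = UNIV \<longleftrightarrow> Ker \<phi> \<inter> pos_part PX = pos_part PX)
    \<and> (\<forall>e. abs_matrix_order_unit_space scX stX PX abX e \<longrightarrow> (\<phi> = (\<lambda>_. 0) \<longleftrightarrow> \<phi> e = 0))"
proof -
  interpret L: Vector_Spaces.linear scX scY \<phi> using phi unfolding completely_abs_preserving_def by blast
  interpret VY: vector_space scY by (rule amos_parts(1)[OF Y])
  have phiab: "\<And>l x. 0 < l \<Longrightarrow> x \<in> carrier_mat l l \<Longrightarrow> map_mat \<phi> (abX x) = abY (map_mat \<phi> x)"
    using phi unfolding completely_abs_preserving_def by blast
  have stYadd: "\<And>x y. stY (x + y) = stY x + stY y" by (rule amos_parts(2)[OF Y])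
  have stXadd: "\<And>x y. stX (x + y) = stX x + stX y" by (rule amos_parts(2)[OF X])
  have pos1: "stY (\<phi> b) = \<phi> b" if b: "one1 b \<in> PX 1" for b
  proof -
    have "map_mat \<phi> (one1 b) \<in> PY 1" by (rule pos_to_pos[OF X Y phi _ b]) simp
    then have "one1 (\<phi> b) \<in> sa_mats stY 1" using P_sub(1)[OF Y] by (simp add: one1_map)
    then have "one1 (stY (\<phi> b)) = one1 (\<phi> b)" unfolding sa_mats_def by (simp add: one1_mstar)
    then show ?thesis by (rule one1_inj)
  qed
  have sa1: "stY (\<phi> a) = \<phi> a" if a: "stX a = a" for a
  proof -
    obtain p q where pq: "one1 p \<in> PX 1" "one1 q \<in> PX 1" "a = p - q"
      using sa_decomp[OF X a] by blast
    show ?thesis using pq by (simp add: L.diff st_diff[of stY, OF stYadd] pos1)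
  qed
  have comm: "\<phi> (stX x) = stY (\<phi> x)" for x
  proof -
    obtain h k where hk: "stX h = h" "stX k = k" "x = h + scX \<i> k" "stX x = h - scX \<i> k"
      using reim[OF amos_parts(1)[OF X] stXadd amos_parts(3)[OF X] amos_inv[OF X]] by blast
    have "\<phi> (stX x) = \<phi> h - scY \<i> (\<phi> k)" using hk(4) by (simp add: L.diff L.scale)
    moreover have "stY (\<phi> x) = \<phi> h - scY \<i> (\<phi> k)"
      using hk(3) sa1[OF hk(1)] sa1[OF hk(2)]
      by (simp add: L.add L.scale stYadd amos_parts(3)[OF Y])
    ultimately show ?thesis by simp
  qed
  have zero_crit: "\<phi> x = 0" if H: "\<forall>a. one1 a \<in> PX 1 \<longrightarrow> \<phi> a = 0" for x
  proof -
    have sa0: "\<phi> a = 0" if a: "stX a = a" for a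
    proof -
      obtain p q where pq: "one1 p \<in> PX 1" "one1 q \<in> PX 1" "a = p - q"
        using sa_decomp[OF X a] by blast
      show ?thesis using pq H by (simp add: L.diff)
    qed
    obtain h k where hk: "stX h = h" "stX k = k" "x = h + scX \<i> k" "stX x = h - scX \<i> k"
      using reim[OF amos_parts(1)[OF X] stXadd amos_parts(3)[OF X] amos_inv[OF X]] by blast
    show ?thesis using hk(3) sa0[OF hk(1)] sa0[OF hk(2)] by (simp add: L.add L.scale)
  qed
  have P1: "\<forall>l m. 0 < l \<longrightarrow> 0 < m \<longrightarrow> mats_of (Ker \<phi>) l m = mat_Ker \<phi> l m"
  proof (intro allI impI)
    fix l m :: nat
    show "mats_of (Ker \<phi>) l m = mat_Ker \<phi> l m"
    proof (rule Set.set_eqI)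
    fix x
    show "x \<in> mats_of (Ker \<phi>) l m \<longleftrightarrow> x \<in> mat_Ker \<phi> l m"
    proof (cases "x \<in> carrier_mat l m")
      case True
      have "x \<in> mats_of (Ker \<phi>) l m \<longleftrightarrow> (\<forall>i<l. \<forall>j<m. \<phi> (x $$ (i,j)) = 0)"
        unfolding mats_of_def Ker_def using True by simp
      also have "\<dots> \<longleftrightarrow> map_mat \<phi> x = 0\<^sub>m l m" by (rule ker_iff[OF True, symmetric])
      also have "\<dots> \<longleftrightarrow> x \<in> mat_Ker \<phi> l m" unfolding mat_Ker_def using True by simp
      finally show ?thesis .
    next
      case False
      then show ?thesis unfolding mats_of_def mat_Ker_def by simp
    qed
    qed
  qed
  have P2: "\<forall>l>0. \<forall>x\<in>mat_Ker \<phi> l l. mstar stX x \<in> mat_Ker \<phi> l l"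
  proof (intro allI impI ballI)
    fix l x assume l: "0 < (l::nat)" and x: "x \<in> mat_Ker \<phi> l l"
    have c: "x \<in> carrier_mat l l" and z: "\<forall>i<l. \<forall>j<l. \<phi> (x $$ (i,j)) = 0"
      using x ker_iff unfolding mat_Ker_def by blast+
    have c2: "mstar stX x \<in> carrier_mat l l" using c unfolding mstar_def by auto
    have "\<forall>i<l. \<forall>j<l. \<phi> (mstar stX x $$ (i,j)) = 0"
      using c z unfolding mstar_def by (auto simp: comm st_zero[of stY, OF stYadd])
    then show "mstar stX x \<in> mat_Ker \<phi> l l" using c2 ker_iff unfolding mat_Ker_def by blast
  qed
  have P3: "abs_matrix_order_ideal scX stX PX abX (Ker \<phi>)"
    unfolding abs_matrix_order_ideal_def
  proof (intro conjI allI impI ballI)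
    show "0 \<in> Ker \<phi>" unfolding Ker_def by simp
    show "x + y \<in> Ker \<phi>" if "x \<in> Ker \<phi>" "y \<in> Ker \<phi>" for x y
      using that unfolding Ker_def by (simp add: L.add)
    show "scX c x \<in> Ker \<phi>" if "x \<in> Ker \<phi>" for c x
      using that unfolding Ker_def by (simp add: L.scale)
  next
    fix l x y
    assume l: "0 < (l::nat)" and x: "x \<in> mats_of (Ker \<phi>) l l \<inter> sa_mats stX l"
      and y: "y \<in> sa_mats stX l" and yp: "y \<in> PX l \<and> x - y \<in> PX l"
    have cx: "x \<in> carrier_mat l l" and cy: "y \<in> carrier_mat l l"
      using x y unfolding sa_mats_def by auto
    have zx: "\<forall>i<l. \<forall>j<l. \<phi> (x $$ (i,j)) = 0" using x unfolding mats_of_def Ker_def by auto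
    have A: "map_mat \<phi> y \<in> PY l" using pos_to_pos[OF X Y phi l] yp by blast
    have B: "map_mat \<phi> (x - y) \<in> PY l" using pos_to_pos[OF X Y phi l] yp by blast
    have "map_mat \<phi> (x - y) = - map_mat \<phi> y"
      using cx cy zx by (intro eq_matI) (auto simp: L.diff)
    then have "map_mat \<phi> y = 0\<^sub>m l l" using proper[OF Y l A] B by simp
    then have "\<forall>i<l. \<forall>j<l. \<phi> (y $$ (i,j)) = 0" using ker_iff[OF cy] by blast
    then show "y \<in> mats_of (Ker \<phi>) l l" using cy unfolding mats_of_def Ker_def by auto
  next
    fix l m x
    assume l: "0 < (l::nat)" and m: "0 < (m::nat)" and x: "x \<in> mats_of (Ker \<phi>) l m"
    have cx: "x \<in> carrier_mat l m" and zx: "\<forall>i<l. \<forall>j<m. \<phi> (x $$ (i,j)) = 0"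
      using x unfolding mats_of_def Ker_def by auto
    have ax: "abX x \<in> PX m" using amos_parts(5)[OF X l m cx] .
    have cax: "abX x \<in> carrier_mat m m" using P_sub(2)[OF X m ax] .
    define z where "z = (0\<^sub>m m l :: 'a mat)"
    have cz: "z \<in> carrier_mat m l" unfolding z_def by simp
    have caz: "abX z \<in> carrier_mat l l" using P_sub(2)[OF X l amos_parts(5)[OF X m l cz]] .
    define D where "D = dsum x z"
    have cD: "D \<in> carrier_mat (l + m) (l + m)" unfolding D_def dsum_def using cx cz
      by (metis add.commute four_block_carrier_mat)
    have aD: "abX D = dsum (abX x) (abX z)" unfolding D_def by (rule amos_parts(7)[OF X l m m l cx cz])
    have "map_mat \<phi> D = 0\<^sub>m (l + m) (l + m)"
      unfolding ker_iff[OF cD]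
    proof (intro allI impI)
      fix i j assume i: "i < l + m" and j: "j < l + m"
      show "\<phi> (D $$ (i,j)) = 0"
        using cx cz i j zx unfolding D_def dsum_def z_def by auto
    qed
    then have "map_mat \<phi> (abX D) = 0\<^sub>m (l + m) (l + m)"
      using phiab[OF _ cD] ab_zero[OF Y] l by simp
    then have zD: "\<forall>i<l+m. \<forall>j<l+m. \<phi> (abX D $$ (i,j)) = 0"
      using ker_iff[of "abX D" "l+m" "l+m"] aD cax caz unfolding dsum_def
      by (metis add.commute four_block_carrier_mat)
    have "\<forall>i<m. \<forall>j<m. \<phi> (abX x $$ (i,j)) = 0"
    proof (intro allI impI)
      fix i j assume i: "i < m" and j: "j < m"
      have "abX D $$ (i,j) = abX x $$ (i,j)" unfolding aD dsum_def using cax caz i j by simp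
      then show "\<phi> (abX x $$ (i,j)) = 0" using zD i j by (metis trans_less_add2)
    qed
    then show "abX x \<in> PX m \<inter> mats_of (Ker \<phi>) m m"
      using ax cax unfolding mats_of_def Ker_def by auto
  qed
  have P4: "\<phi> = (\<lambda>_. 0) \<longleftrightarrow> Ker \<phi> = UNIV" unfolding Ker_def by auto
  have P5: "Ker \<phi> = UNIV \<longleftrightarrow> Ker \<phi> \<inter> pos_part PX = pos_part PX"
  proof
    assume "Ker \<phi> \<inter> pos_part PX = pos_part PX"
    then have "\<forall>a. one1 a \<in> PX 1 \<longrightarrow> \<phi> a = 0" unfolding pos_part_iff[symmetric] Ker_def by blast
    then show "Ker \<phi> = UNIV" using zero_crit unfolding Ker_def by blast
  qed simp
  have P6: "\<forall>e. abs_matrix_order_unit_space scX stX PX abX e \<longrightarrow> (\<phi> = (\<lambda>_. 0) \<longleftrightarrow> \<phi> e = 0)"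
  proof (intro allI impI iffI)
    fix e assume "\<phi> = (\<lambda>_. 0)" then show "\<phi> e = 0" by simp
  next
    fix e assume ou: "abs_matrix_order_unit_space scX stX PX abX e" and e0: "\<phi> e = 0"
    have one_pos: "(0::nat) < 1" by simp
    have mou: "matrix_order_unit_space scX stX PX e"
      using ou unfolding abs_matrix_order_unit_space_def by blast
    have U: "\<forall>v\<in>sa_mats stX 1. \<exists>k>0. rsm scX k (diag_e 1 e) + v \<in> PX 1 \<and> rsm scX k (diag_e 1 e) - v \<in> PX 1"
      using mou unfolding matrix_order_unit_space_def by simp
    have "\<forall>a. one1 a \<in> PX 1 \<longrightarrow> \<phi> a = 0"
    proof (intro allI impI)
      fix a assume a: "one1 a \<in> PX 1"
      have "one1 a \<in> sa_mats stX 1" using P_sub(1)[OF X _ a] by simp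
      then obtain k where "rsm scX k (diag_e 1 e) - one1 a \<in> PX 1" using U by blast
      then have "one1 (scX (complex_of_real k) e - a) \<in> PX 1"
        unfolding diag_e1 one1_rsm one1_minus .
      from pos_to_pos[OF X Y phi one_pos this]
      have "map_mat \<phi> (one1 (scX (complex_of_real k) e - a)) \<in> PY 1" .
      moreover have "map_mat \<phi> (one1 (scX (complex_of_real k) e - a)) = - one1 (\<phi> a)"
        unfolding one1_map one1_uminus L.diff L.scale e0 L.vs2.scale_zero_right by simp
      ultimately have m1: "- one1 (\<phi> a) \<in> PY 1" by simp
      from pos_to_pos[OF X Y phi one_pos a]
      have m2: "one1 (\<phi> a) \<in> PY 1" unfolding one1_map .
      have "one1 (\<phi> a) = 0\<^sub>m 1 1" by (rule proper[OF Y one_pos m2 m1])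
      then have "one1 (\<phi> a) $$ (0,0) = 0\<^sub>m 1 1 $$ (0,0)" by simp
      then show "\<phi> a = 0" by simp
    qed
    then show "\<phi> = (\<lambda>_. 0)" using zero_crit by blast
  qed
  show ?thesis by (intro conjI P1 P2 P3 P4 P5 P6)
qed

end
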